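(* Let $X\in\mathbb{R}^{m\times n}$ be fixed, $V=\frac1nXX^\top$, $W^K,W^Q\in\mathbb{R}^{n\times n_k}$ with i.i.d. $\mathcal N(0,1)$ entries, $Y=\frac1nXW^KW^{Q,\top}X^\top$, $\tau>0$, and $A=I+\mathrm{Softmax}(\tau^{-1}Y)-\frac1m\mathbf 1\mathbf 1^\top$ (Softmax row-wise). Then $$\begin{aligned}\mathbb{E}[A^{\alpha\alpha'}A^{\beta\beta'}A^{\delta\delta'}A^{\omega\omega'}]={}&\delta_{\alpha\alpha'}\delta_{\beta\beta'}\delta_{\delta\delta'}\delta_{\omega\omega'}\\&+\frac{n_k}{\tau^2m^2}\Big(\delta_{\alpha\alpha'}\delta_{\beta\beta'}S_1^{\delta\delta',\omega\omega'}+\delta_{\alpha\alpha'}\delta_{\delta\delta'}S_1^{\beta\beta',\omega\omega'}+\delta_{\alpha\alpha'}\delta_{\omega\omega'}S_1^{\beta\beta',\delta\delta'}\\&\qquad+\delta_{\beta\beta'}\delta_{\delta\delta'}S_1^{\alpha\alpha',\omega\omega'}+\delta_{\beta\beta'}\delta_{\omega\omega'}S_1^{\alpha\alpha',\delta\delta'}+\delta_{\omega\omega'}\delta_{\delta\delta'}S_1^{\alpha\alpha',\beta\beta'}\Big)\\&+\frac{n_k}{2\tau^2m}\Big(\delta_{\alpha\alpha'}\delta_{\beta\beta'}\delta_{\delta\delta'}S_2^{\omega\omega'}+\delta_{\alpha\alpha'}\delta_{\beta\beta'}\delta_{\omega\omega'}S_2^{\delta\delta'}+\delta_{\alpha\a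lpha'}\delta_{\omega\omega'}\delta_{\delta\delta'}S_2^{\beta\beta'}+\delta_{\omega\omega'}\delta_{\beta\beta'}\delta_{\delta\delta'}S_2^{\alpha\alpha'}\Big)\\&+O(n_k\tau^{-3}).\end{aligned}$$
   Context: $\delta_{\alpha\beta}$ is the Kronecker delta. With $V^{\alpha\bar x}=\frac1m\sum_\nu V^{\alpha\nu}$, $V^{\bar x\bar x}=\frac1{m^2}\sum_{\nu,\kappa}V^{\nu\kappa}$, $\bar V=\frac1m\sum_\nu V^{\nu\nu}$: $S_1^{\alpha\delta,\beta\omega}=V^{\alpha\beta}(V^{\delta\omega}-V^{\delta\bar x}-V^{\omega\bar x}+V^{\bar x\bar x})$ and $S_2^{\alpha\delta}=V^{\alpha\alpha}(V^{\delta\delta}-2V^{\delta\bar x}+2V^{\bar x\bar x}-\bar V)$. $O(n_k\tau^{-3})$ denotes a remainder bounded by a constant (independent of $\tau$) times $n_k\tau^{-3}$ as $\tau\to\infty$. *)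

theory Defs
  imports "HOL-Probability.Probability"
begin

text \<open>Matrices are functions nat => nat => real, used only at indices below the
relevant dimensions. X is m x n, W^K and W^Q are n x nk.\<close>

definition kron :: "nat \<Rightarrow> nat \<Rightarrow> real" where
  "kron a b = (if a = b then 1 else 0)"

definition Vm :: "nat \<Rightarrow> (nat \<Rightarrow> nat \<Rightarrow> real) \<Rightarrow> nat \<Rightarrow> nat \<Rightarrow> real" where
  "Vm n X a b = (1 / real n) * (\<Sum>i<n. X a i * X b i)"

definition Vxb :: "nat \<Rightarrow> nat \<Rightarrow> (nat \<Rightarrow> nat \<Rightarrow> real) \<Rightarrow> nat \<Rightarrow> real" where
  "Vxb m n X a = (1 / real m) * (\<Sum>\<nu><m. Vm n X a \<nu>)"

definition Vxx :: "nat \<Rightarrow> nat \<Rightarrow> (nat \<Rightarrow> nat \<Rightarrow> real) \<Rightarrow> real" where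
  "Vxx m n X = (1 / (real m)^2) * (\<Sum>\<nu><m. \<Sum>\<kappa><m. Vm n X \<nu> \<kappa>)"

definition Vbar :: "nat \<Rightarrow> nat \<Rightarrow> (nat \<Rightarrow> nat \<Rightarrow> real) \<Rightarrow> real" where
  "Vbar m n X = (1 / real m) * (\<Sum>\<nu><m. Vm n X \<nu> \<nu>)"

definition S1 :: "nat \<Rightarrow> nat \<Rightarrow> (nat \<Rightarrow> nat \<Rightarrow> real) \<Rightarrow> nat \<Rightarrow> nat \<Rightarrow> nat \<Rightarrow> nat \<Rightarrow> real" where
  "S1 m n X a d b w = Vm n X a b * (Vm n X d w - Vxb m n X d - Vxb m n X w + Vxx m n X)"

definition S2 :: "nat \<Rightarrow> nat \<Rightarrow> (nat \<Rightarrow> nat \<Rightarrow> real) \<Rightarrow> nat \<Rightarrow> nat \<Rightarrow> real" where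
  "S2 m n X a d = Vm n X a a * (Vm n X d d - 2 * Vxb m n X d + 2 * Vxx m n X - Vbar m n X)"

definition Ym :: "nat \<Rightarrow> nat \<Rightarrow> (nat \<Rightarrow> nat \<Rightarrow> real) \<Rightarrow> (nat \<Rightarrow> nat \<Rightarrow> real)
    \<Rightarrow> (nat \<Rightarrow> nat \<Rightarrow> real) \<Rightarrow> nat \<Rightarrow> nat \<Rightarrow> real" where
  "Ym n nk X WK WQ a b =
     (1 / real n) * (\<Sum>i<n. \<Sum>j<n. \<Sum>k<nk. X a i * WK i k * WQ j k * X b j)"

definition softmax_row :: "nat \<Rightarrow> (nat \<Rightarrow> nat \<Rightarrow> real) \<Rightarrow> nat \<Rightarrow> nat \<Rightarrow> real" where
  "softmax_row m Z a b = exp (Z a b) / (\<Sum>c<m. exp (Z a c))"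

definition Am :: "nat \<Rightarrow> nat \<Rightarrow> nat \<Rightarrow> (nat \<Rightarrow> nat \<Rightarrow> real) \<Rightarrow> real \<Rightarrow> (nat \<Rightarrow> nat \<Rightarrow> real)
    \<Rightarrow> (nat \<Rightarrow> nat \<Rightarrow> real) \<Rightarrow> nat \<Rightarrow> nat \<Rightarrow> real" where
  "Am m n nk X \<tau> WK WQ a b =
     kron a b + softmax_row m (\<lambda>c e. Ym n nk X WK WQ c e / \<tau>) a b - 1 / real m"

text \<open>Joint law of (W^K, W^Q): i.i.d. standard normal entries indexed by
(i, k, True) for W^K_{ik} and (i, k, False) for W^Q_{ik}, i < n, k < nk.\<close>
definition gauss_weights :: "nat \<Rightarrow> nat \<Rightarrow> (nat \<times> nat \<times> bool \<Rightarrow> real) measure" where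
  "gauss_weights n nk =
     PiM ({..<n} \<times> {..<nk} \<times> UNIV) (\<lambda>_. density lborel std_normal_density)"

definition WKof :: "(nat \<times> nat \<times> bool \<Rightarrow> real) \<Rightarrow> nat \<Rightarrow> nat \<Rightarrow> real" where
  "WKof w i k = w (i, k, True)"

definition WQof :: "(nat \<times> nat \<times> bool \<Rightarrow> real) \<Rightarrow> nat \<Rightarrow> nat \<Rightarrow> real" where
  "WQof w i k = w (i, k, False)"

end

theory Submission
  imports Defs "HOL-Probability.Probability"
begin


abbreviation "NN \<equiv> density lborel std_normal_density"

lemma NN_prob: "prob_space NN"
  by (intro prob_space_normal_density) simp

lemma NN_mom_int: "integrable NN (\<lambda>t. t ^ k)"
  by (subst integrable_density) (auto simp: integrable_std_normal_moment)

lemma NN_mom_eq: "integral\<^sup>L NN (\<lambda>t. t ^ k) = integral\<^sup>L lborel (\<lambda>t. std_normal_density t * t ^ k)"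
  by (subst integral_density) auto

lemma NN_mom0: "integral\<^sup>L NN (\<lambda>t. t ^ 0) = 1"
  using prob_space.prob_space[OF NN_prob] by simp

lemma NN_mom1: "integral\<^sup>L NN (\<lambda>t. t ^ 1) = 0"
  using integral_std_normal_moment_odd[of 0] NN_mom_eq[of 1] by simp

lemma NN_mom1': "integral\<^sup>L NN (\<lambda>t. t) = 0"
  using NN_mom1 by simp

lemma NN_mom2: "integral\<^sup>L NN (\<lambda>t. t ^ 2) = 1"
  using integral_std_normal_moment_even[of 1] NN_mom_eq[of 2] by simp

lemma GPsf: "product_sigma_finite (\<lambda>_::nat\<times>nat\<times>bool. NN)"
  unfolding product_sigma_finite_def
  using prob_space_imp_sigma_finite[OF NN_prob] by simp

definition Iset :: "nat \<Rightarrow> nat \<Rightarrow> (nat \<times> nat \<times> bool) set" where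
  "Iset n nk = {..<n} \<times> {..<nk} \<times> UNIV"

lemma finite_Iset[simp]: "finite (Iset n nk)"
  unfolding Iset_def by auto

lemma gw_def: "gauss_weights n nk = PiM (Iset n nk) (\<lambda>_. NN)"
  unfolding gauss_weights_def Iset_def ..

definition gmono :: "(nat \<times> nat \<times> bool \<Rightarrow> nat) \<Rightarrow> nat \<Rightarrow> nat \<Rightarrow> (nat \<times> nat \<times> bool \<Rightarrow> real) \<Rightarrow> real" where
  "gmono e n nk w = (\<Prod>p\<in>Iset n nk. w p ^ e p)"

lemma mono_int: "integrable (gauss_weights n nk) (gmono e n nk)"
proof -
  have "integrable (PiM (Iset n nk) (\<lambda>_. NN)) (\<lambda>w. \<Prod>p\<in>Iset n nk. (\<lambda>p t. t ^ e p) p (w p))"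
    by (rule product_sigma_finite.product_integrable_prod[OF GPsf]) (auto simp: NN_mom_int)
  then show ?thesis unfolding gw_def gmono_def[abs_def] by simp
qed

lemma mono_integral: "integral\<^sup>L (gauss_weights n nk) (gmono e n nk) = (\<Prod>p\<in>Iset n nk. integral\<^sup>L NN (\<lambda>t. t ^ e p))"
proof -
  have "integral\<^sup>L (PiM (Iset n nk) (\<lambda>_. NN)) (\<lambda>w. \<Prod>p\<in>Iset n nk. (\<lambda>p t. t ^ e p) p (w p)) = (\<Prod>p\<in>Iset n nk. integral\<^sup>L NN ((\<lambda>p t. t ^ e p) p))"
    by (rule product_sigma_finite.product_integral_prod[OF GPsf]) (auto simp: NN_mom_int)
  then show ?thesis unfolding gw_def gmono_def[abs_def] by simp
qed



definition dl :: "nat \<times> nat \<times> bool \<Rightarrow> nat \<times> nat \<times> bool \<Rightarrow> nat" where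
  "dl p x = (if x = p then 1 else 0)"

lemma gmono_add: "gmono (\<lambda>x. e1 x + e2 x) n nk w = gmono e1 n nk w * gmono e2 n nk w"
  unfolding gmono_def by (simp add: power_add prod.distrib)

lemma gmono_dl: "p \<in> Iset n nk \<Longrightarrow> gmono (dl p) n nk w = w p"
proof -
  assume p: "p \<in> Iset n nk"
  have "\<And>pa. w pa ^ (if pa = p then 1 else 0) = (if pa = p then w p else 1)" by simp
  then show ?thesis unfolding gmono_def dl_def using p by (simp add: prod.delta)
qed

lemma gmono_ex: "\<exists>x\<in>Iset n nk. integral\<^sup>L NN (\<lambda>t. t ^ e x) = 0 \<Longrightarrow>
   integral\<^sup>L (gauss_weights n nk) (gmono e n nk) = 0"
  by (auto simp: mono_integral prod_zero_iff)

lemma gmono_all1: "\<forall>x. e x = 0 \<or> e x = 2 \<Longrightarrow>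
   integral\<^sup>L (gauss_weights n nk) (gmono e n nk) = 1"
proof -
  assume h: "\<forall>x. e x = 0 \<or> e x = 2"
  have "\<And>x. integral\<^sup>L NN (\<lambda>t. t ^ e x) = 1"
    using h NN_mom0 NN_mom2 by (metis)
  then show ?thesis by (simp add: mono_integral)
qed

lemma four_eq:
  assumes "i < n" "i' < n" "j < n" "j' < n" "k < nk" "k' < nk"
  shows "(\<lambda>w. w (i,k,True) * w (j,k,False) * w (i',k',True) * w (j',k',False)) =
    gmono (\<lambda>x. dl (i,k,True) x + dl (j,k,False) x + dl (i',k',True) x + dl (j',k',False) x) n nk"
  using assms by (simp add: gmono_add gmono_dl Iset_def fun_eq_iff)

lemma four_int:
  assumes "i < n" "i' < n" "j < n" "j' < n" "k < nk" "k' < nk"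
  shows "integrable (gauss_weights n nk) (\<lambda>w. w (i,k,True) * w (j,k,False) * w (i',k',True) * w (j',k',False))"
  unfolding four_eq[OF assms] by (rule mono_int)

lemma four_integral:
  assumes "i < n" "i' < n" "j < n" "j' < n" "k < nk" "k' < nk"
  shows "(\<integral>w. w (i,k,True) * w (j,k,False) * w (i',k',True) * w (j',k',False) \<partial>gauss_weights n nk)
     = (if i = i' \<and> j = j' \<and> k = k' then 1 else 0)"
proof (cases "i = i' \<and> j = j' \<and> k = k'")
  case True
  then show ?thesis unfolding four_eq[OF assms]
    by (intro gmono_all1[THEN trans]) (auto simp: dl_def)
next
  case False
  show ?thesis unfolding four_eq[OF assms] using False
  proof (intro gmono_ex[THEN trans])
    show "\<exists>x\<in>Iset n nk. integral\<^sup>L NN (\<lambda>t. t ^ (dl (i, k, True) x + dl (j, k, False) x + dl (i', k', True) x + dl (j', k', False) x)) = 0"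
    proof (cases "i = i' \<and> k = k'")
      case True
      then have "j \<noteq> j'" using False by auto
      then show ?thesis using assms True by (intro bexI[of _ "(j,k,False)"]) (auto simp: dl_def Iset_def NN_mom1 NN_mom1')
    next
      case False
      then show ?thesis using assms by (intro bexI[of _ "(i,k,True)"]) (auto simp: dl_def Iset_def NN_mom1 NN_mom1')
    qed
  qed (use False in simp)
qed

lemma two_eq:
  assumes "i < n" "j < n" "k < nk"
  shows "(\<lambda>w. w (i,k,True) * w (j,k,False)) = gmono (\<lambda>x. dl (i,k,True) x + dl (j,k,False) x) n nk"
  using assms by (simp add: gmono_add gmono_dl Iset_def fun_eq_iff)

lemma two_int:
  assumes "i < n" "j < n" "k < nk"
  shows "integrable (gauss_weights n nk) (\<lambda>w. w (i,k,True) * w (j,k,False))"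
  unfolding two_eq[OF assms] by (rule mono_int)

lemma two_integral:
  assumes "i < n" "j < n" "k < nk"
  shows "(\<integral>w. w (i,k,True) * w (j,k,False) \<partial>gauss_weights n nk) = 0"
  unfolding two_eq[OF assms]
  by (rule gmono_ex, rule bexI[of _ "(i,k,True)"]) (use assms in \<open>auto simp: dl_def Iset_def NN_mom1 NN_mom1'\<close>)



definition YY :: "nat \<Rightarrow> nat \<Rightarrow> (nat \<Rightarrow> nat \<Rightarrow> real) \<Rightarrow> (nat \<times> nat \<times> bool \<Rightarrow> real) \<Rightarrow> nat \<Rightarrow> nat \<Rightarrow> real" where
  "YY n nk X w a b = Ym n nk X (WKof w) (WQof w) a b"

lemma isum3_int:
  assumes "\<And>i j k. i \<in> A \<Longrightarrow> j \<in> B \<Longrightarrow> k \<in> C \<Longrightarrow> integrable M (f i j k)"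
  shows "integrable M (\<lambda>x. \<Sum>i\<in>A. \<Sum>j\<in>B. \<Sum>k\<in>C. f i j k x)"
  by (intro Bochner_Integration.integrable_sum assms)

lemma isum3_eq:
  fixes f :: "_ \<Rightarrow> _ \<Rightarrow> _ \<Rightarrow> _ \<Rightarrow> real"
  assumes "\<And>i j k. i \<in> A \<Longrightarrow> j \<in> B \<Longrightarrow> k \<in> C \<Longrightarrow> integrable M (f i j k)"
  shows "(\<integral>x. (\<Sum>i\<in>A. \<Sum>j\<in>B. \<Sum>k\<in>C. f i j k x) \<partial>M) = (\<Sum>i\<in>A. \<Sum>j\<in>B. \<Sum>k\<in>C. integral\<^sup>L M (f i j k))"
proof -
  have "(\<integral>x. (\<Sum>i\<in>A. \<Sum>j\<in>B. \<Sum>k\<in>C. f i j k x) \<partial>M) = (\<Sum>i\<in>A. \<integral>x. (\<Sum>j\<in>B. \<Sum>k\<in>C. f i j k x) \<partial>M)"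
    by (rule Bochner_Integration.integral_sum) (intro Bochner_Integration.integrable_sum assms)
  also have "\<dots> = (\<Sum>i\<in>A. \<Sum>j\<in>B. \<integral>x. (\<Sum>k\<in>C. f i j k x) \<partial>M)"
    by (intro sum.cong refl Bochner_Integration.integral_sum Bochner_Integration.integrable_sum assms)
  also have "\<dots> = (\<Sum>i\<in>A. \<Sum>j\<in>B. \<Sum>k\<in>C. integral\<^sup>L M (f i j k))"
    by (intro sum.cong refl Bochner_Integration.integral_sum Bochner_Integration.integrable_sum assms)
  finally show ?thesis .
qed

lemma sum3_delta:
  fixes g :: "nat \<Rightarrow> nat \<Rightarrow> nat \<Rightarrow> real"
  assumes "finite A" "finite B" "finite C" "i \<in> A" "j \<in> B" "k \<in> C"
  shows "(\<Sum>i'\<in>A. \<Sum>j'\<in>B. \<Sum>k'\<in>C. if i = i' \<and> j = j' \<and> k = k' then g i' j' k' else 0) = g i j k"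
proof -
  have "(\<Sum>i'\<in>A. \<Sum>j'\<in>B. \<Sum>k'\<in>C. if i = i' \<and> j = j' \<and> k = k' then g i' j' k' else 0)
     = (\<Sum>i'\<in>A. if i = i' then (\<Sum>j'\<in>B. if j = j' then (\<Sum>k'\<in>C. if k = k' then g i' j' k' else 0) else 0) else 0)"
    by (intro sum.cong refl) (auto intro!: sum.cong)
  then show ?thesis using assms by (simp add: sum.delta)
qed

lemma mult_if_delta_r: "(if P then c else 0) = c * (if P then 1 else (0::real))" by simp

lemma YY_exp: "YY n nk X w a b = (\<Sum>i<n. \<Sum>j<n. \<Sum>k<nk. (X a i * X b j / n) * (w (i,k,True) * w (j,k,False)))"
  unfolding YY_def Ym_def WKof_def WQof_def
  by (simp add: sum_distrib_left algebra_simps)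

lemma YY_int: "integrable (gauss_weights n nk) (\<lambda>w. YY n nk X w a b)"
  unfolding YY_exp
  by (intro Bochner_Integration.integrable_sum integrable_mult_right two_int) auto

lemma YY_integral: "(\<integral>w. YY n nk X w a b \<partial>gauss_weights n nk) = 0"
  unfolding YY_exp
  by (subst isum3_eq) (auto simp: two_int two_integral)

lemma YY2_exp: "YY n nk X w a b * YY n nk X w c d =
  (\<Sum>i<n. \<Sum>j<n. \<Sum>k<nk. \<Sum>i'<n. \<Sum>j'<n. \<Sum>k'<nk.
     (X a i * X b j * X c i' * X d j' / n^2) * (w (i,k,True) * w (j,k,False) * w (i',k',True) * w (j',k',False)))"
  unfolding YY_exp sum_distrib_right
  unfolding sum_distrib_left
  by (intro sum.cong refl) (simp add: power2_eq_square)

lemma YY2_int: "integrable (gauss_weights n nk) (\<lambda>w. YY n nk X w a b * YY n nk X w c d)"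
  unfolding YY2_exp
  by (intro Bochner_Integration.integrable_sum integrable_mult_right four_int) auto

lemma YY2_integral: "(\<integral>w. YY n nk X w a b * YY n nk X w c d \<partial>gauss_weights n nk) = real nk * Vm n X a c * Vm n X b d"
proof -
  have "(\<integral>w. YY n nk X w a b * YY n nk X w c d \<partial>gauss_weights n nk) =
    (\<Sum>i<n. \<Sum>j<n. \<Sum>k<nk. \<Sum>i'<n. \<Sum>j'<n. \<Sum>k'<nk.
     (X a i * X b j * X c i' * X d j' / n^2) * (if i = i' \<and> j = j' \<and> k = k' then 1 else 0))"
    unfolding YY2_exp
    apply (subst isum3_eq)
     apply (rule isum3_int)
     apply (auto simp: four_int)[1]
    apply (intro sum.cong refl)
    apply (subst isum3_eq)
     apply (auto simp: four_int four_integral)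
    done
  also have "\<dots> = (\<Sum>i<n. \<Sum>j<n. \<Sum>k<nk. (X a i * X b j * X c i * X d j / n^2))"
    by (intro sum.cong refl, subst mult_if_delta_r[symmetric]) (simp add: sum3_delta)
  also have "\<dots> = real nk * Vm n X a c * Vm n X b d"
    unfolding Vm_def
    by (simp add: sum_distrib_left sum_distrib_right power2_eq_square algebra_simps)
  finally show ?thesis .
qed



definition Yc :: "nat \<Rightarrow> nat \<Rightarrow> nat \<Rightarrow> (nat \<Rightarrow> nat \<Rightarrow> real) \<Rightarrow> (nat \<times> nat \<times> bool \<Rightarrow> real) \<Rightarrow> nat \<Rightarrow> nat \<Rightarrow> real" where
  "Yc m n nk X w a b = YY n nk X w a b - (1 / real m) * (\<Sum>e<m. YY n nk X w a e)"

lemma Vm_sym: "Vm n X a b = Vm n X b a"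
  unfolding Vm_def by (simp add: mult.commute)

lemma Yc_int: "integrable (gauss_weights n nk) (\<lambda>w. Yc m n nk X w a b)"
  unfolding Yc_def by (intro Bochner_Integration.integrable_diff integrable_mult_right Bochner_Integration.integrable_sum YY_int)

lemma Yc_integral: "(\<integral>w. Yc m n nk X w a b \<partial>gauss_weights n nk) = 0"
  unfolding Yc_def
  by (simp add: Bochner_Integration.integral_diff Bochner_Integration.integrable_sum YY_int
      Bochner_Integration.integral_sum YY_integral)

lemma Yc2_exp: "Yc m n nk X w a b * Yc m n nk X w c d =
   YY n nk X w a b * YY n nk X w c d
   - (1 / real m) * (\<Sum>f<m. YY n nk X w a b * YY n nk X w c f)
   - (1 / real m) * (\<Sum>e<m. YY n nk X w a e * YY n nk X w c d)
   + (1 / real m)^2 * (\<Sum>e<m. \<Sum>f<m. YY n nk X w a e * YY n nk X w c f)"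
proof -
  define A where "A = YY n nk X w a b"
  define C where "C = YY n nk X w c d"
  define B where "B = (\<Sum>e<m. YY n nk X w a e)"
  define D where "D = (\<Sum>f<m. YY n nk X w c f)"
  have 1: "A * D = (\<Sum>f<m. YY n nk X w a b * YY n nk X w c f)" unfolding A_def D_def by (simp add: sum_distrib_left)
  have 2: "B * C = (\<Sum>e<m. YY n nk X w a e * YY n nk X w c d)" unfolding B_def C_def by (simp add: sum_distrib_right)
  have 3: "B * D = (\<Sum>e<m. \<Sum>f<m. YY n nk X w a e * YY n nk X w c f)" unfolding B_def D_def by (simp add: sum_product)
  have "(A - 1 / real m * B) * (C - 1 / real m * D) = A * C - 1 / real m * (A * D) - 1 / real m * (B * C) + (1 / real m)^2 * (B * D)"
    by (simp add: algebra_simps power2_eq_square)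
  then show ?thesis unfolding 1 2 3 unfolding A_def B_def C_def D_def Yc_def .
qed

lemma Yc2_int: "integrable (gauss_weights n nk) (\<lambda>w. Yc m n nk X w a b * Yc m n nk X w c d)"
  unfolding Yc2_exp
  by (intro Bochner_Integration.integrable_diff Bochner_Integration.integrable_add integrable_mult_right
       Bochner_Integration.integrable_sum YY2_int)

lemma Yc2_integral: "(\<integral>w. Yc m n nk X w a b * Yc m n nk X w c d \<partial>gauss_weights n nk) = real nk * S1 m n X a b c d"
proof -
  have "(\<integral>w. Yc m n nk X w a b * Yc m n nk X w c d \<partial>gauss_weights n nk) =
     real nk * Vm n X a c * Vm n X b d
   - (1 / real m) * (\<Sum>f<m. real nk * Vm n X a c * Vm n X b f)
   - (1 / real m) * (\<Sum>e<m. real nk * Vm n X a c * Vm n X e d)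
   + (1 / real m)^2 * (\<Sum>e<m. \<Sum>f<m. real nk * Vm n X a c * Vm n X e f)"
    unfolding Yc2_exp
    by (simp add: Bochner_Integration.integral_diff Bochner_Integration.integral_add Bochner_Integration.integrable_sum YY2_int
      Bochner_Integration.integral_sum YY2_integral Bochner_Integration.integrable_diff)
  also have "\<dots> = real nk * S1 m n X a b c d"
    unfolding S1_def Vxb_def Vxx_def
    by (simp add: sum_distrib_left sum_distrib_right algebra_simps power2_eq_square Vm_sym sum_divide_distrib)
  finally show ?thesis .
qed



lemma exp2_le9: "exp (2::real) \<le> 9"
proof -
  have "exp (1::real) \<le> 3" using exp_le by simp
  then have "exp (1::real) * exp 1 \<le> 3 * 3" by (intro mult_mono) auto
  then show ?thesis by (simp add: mult_exp_exp)
qed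

lemma exp_taylor3:
  fixes y :: real assumes "\<bar>y\<bar> \<le> 2"
  shows "\<bar>exp y - 1 - y - y^2/2\<bar> \<le> 2 * \<bar>y\<bar>^3"
proof -
  obtain s where s: "\<bar>s\<bar> \<le> \<bar>y\<bar>" "exp y = (\<Sum>m<3. (y ^ m) / fact m) + (exp s / fact 3) * y ^ 3"
    using Maclaurin_exp_le[of y 3] by blast
  have e: "exp s \<le> 9" using s(1) assms exp2_le9 by (meson abs_le_D1 exp_le_cancel_iff order_trans)
  have "exp y - 1 - y - y^2/2 = (exp s / 6) * y ^ 3"
    using s(2) by (simp add: eval_nat_numeral fact_numeral)
  then have "\<bar>exp y - 1 - y - y^2/2\<bar> = \<bar>(exp s / 6) * y ^ 3\<bar>" by (rule arg_cong[of _ _ abs])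
  also have "\<dots> = (exp s / 6) * \<bar>y\<bar> ^ 3" by (simp add: abs_mult power_abs)
  also have "\<dots> \<le> 2 * \<bar>y\<bar> ^ 3" using e by (intro mult_right_mono) auto
  finally show ?thesis .
qed

lemma sm_core:
  fixes u :: "nat \<Rightarrow> real" and m b :: nat and t :: real
  assumes m: "m > 0" and b: "b < m" and t: "0 \<le> t" "t \<le> 1"
    and u: "\<And>c. c < m \<Longrightarrow> \<bar>u c\<bar> \<le> 2 * t" and s0: "(\<Sum>c<m. u c) = 0"
  shows "\<bar>exp (u b) / (\<Sum>c<m. exp (u c)) - (1 / m) * (1 + u b + (u b)^2 / 2 - (1/2) * (\<Sum>c<m. (u c)^2) / m)\<bar> \<le> 1260 * t^3"
proof -
  define r where "r c = exp (u c) - 1 - u c - (u c)^2/2" for c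
  define q where "q = (1/2) * (\<Sum>c<m. (u c)^2)"
  define R where "R = (\<Sum>c<m. r c)"
  define D where "D = (\<Sum>c<m. exp (u c))"
  define P where "P = u b + (u b)^2 / 2 - q / m"
  have mpos: "real m > 0" using m by simp
  have t3: "\<bar>u c\<bar>^3 \<le> 8 * t^3" if "c < m" for c
  proof -
    have "\<bar>u c\<bar>^3 \<le> (2*t)^3" using u[OF that] by (intro power_mono) auto
    then show ?thesis by (simp add: power_mult_distrib)
  qed
  have rb: "\<bar>r c\<bar> \<le> 16 * t^3" if "c < m" for c
  proof -
    have "\<bar>u c\<bar> \<le> 2" using u[OF that] t by linarith
    then have "\<bar>r c\<bar> \<le> 2 * \<bar>u c\<bar>^3" unfolding r_def by (rule exp_taylor3)
    then show ?thesis using t3[OF that] by linarith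
  qed
  have Rb: "\<bar>R\<bar> \<le> m * (16 * t^3)"
  proof -
    have "\<bar>R\<bar> \<le> (\<Sum>c<m. \<bar>r c\<bar>)" unfolding R_def by (rule sum_abs)
    also have "\<dots> \<le> (\<Sum>c<m. 16 * t^3)" by (intro sum_mono rb) auto
    finally show ?thesis by simp
  qed
  have usq: "(u c)^2 \<le> 4 * t^2" if "c < m" for c
  proof -
    have "(u c)^2 = \<bar>u c\<bar>^2" by simp
    also have "\<dots> \<le> (2*t)^2" using u[OF that] by (intro power_mono) auto
    finally show ?thesis by (simp add: power_mult_distrib)
  qed
  have q0: "0 \<le> q" unfolding q_def by (intro mult_nonneg_nonneg sum_nonneg) auto
  have qb: "q \<le> m * (2 * t^2)"
  proof -
    have "(\<Sum>c<m. (u c)^2) \<le> (\<Sum>c<m. 4 * t^2)" by (intro sum_mono usq) auto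
    then show ?thesis unfolding q_def by simp
  qed
  have D_eq: "D = m + q + R"
  proof -
    have "D = (\<Sum>c<m. 1 + u c + (u c)^2/2 + r c)" unfolding D_def r_def by simp
    also have "\<dots> = m + (\<Sum>c<m. u c) + (\<Sum>c<m. (u c)^2) / 2 + R"
      unfolding R_def by (simp add: sum.distrib sum_divide_distrib)
    finally show ?thesis using s0 unfolding q_def by simp
  qed
  have Dlow: "D \<ge> m / 9"
  proof -
    have "exp (u c) \<ge> 1/9" if "c < m" for c
    proof -
      have "exp (-2) \<le> exp (u c)" using u[OF that] t by simp
      moreover have "exp (-2::real) = 1 / exp 2" by (simp add: exp_minus field_simps)
      moreover have "1 / exp (2::real) \<ge> 1/9" using exp2_le9 by (simp add: field_simps)
      ultimately show ?thesis by linarith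
    qed
    then have "(\<Sum>c<m. (1/9::real)) \<le> D" unfolding D_def by (intro sum_mono) auto
    then show ?thesis by simp
  qed
  have Dpos: "D > 0" using Dlow mpos by linarith
  have N_eq: "exp (u b) = 1 + u b + (u b)^2/2 + r b" unfolding r_def by simp
  define T where "T = (1 / m) * (1 + u b + (u b)^2 / 2 - (1/2) * (\<Sum>c<m. (u c)^2) / m)"
  have T_eq: "T = (1 / m) * (1 + P)" unfolding T_def P_def q_def by (simp add: algebra_simps)
  have key: "exp (u b) - T * D = r b - R / m - (1/m) * P * (q + R)"
  proof -
    have e1: "(1/m)*(1+P)*(m+q+R) = 1 + P + q/m + R/m + (1/m)*P*(q+R)" using mpos by (simp add: field_simps)
    have e2: "u b + (u b)^2/2 = P + q/m" unfolding P_def by simp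
    show ?thesis unfolding N_eq T_eq D_eq e1 using e2 by linarith
  qed
  have ub: "\<bar>u b\<bar> \<le> 2 * t" using u[OF b] .
  have t2: "t^2 \<le> t" using t by (simp add: power2_eq_square mult_left_le_one_le)
  have Pb: "\<bar>P\<bar> \<le> 6 * t"
  proof -
    have "(u b)^2 \<le> 4 * t" using usq[OF b] t2 by linarith
    moreover have "q / m \<le> 2 * t"
    proof -
      have "real m * (2 * t^2) \<le> real m * (2*t)" using t2 by (intro mult_left_mono) auto
      then have "q \<le> real m * (2*t)" using qb by linarith
      then show ?thesis using mpos by (metis pos_divide_le_eq mult.commute)
    qed
    moreover have "q / m \<ge> 0" using q0 mpos by simp
    moreover have "(u b)^2 \<ge> 0" by simp
    moreover have "-(2*t) \<le> u b" "u b \<le> 2*t" using ub by auto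
    ultimately show ?thesis unfolding P_def abs_le_iff by (intro conjI) linarith+
  qed
  have qRb: "\<bar>q + R\<bar> \<le> m * (18 * t^2)"
  proof -
    have "t^3 \<le> t^2" using t by (simp add: power_decreasing)
    then have "real m * (16 * t^3) \<le> real m * (16 * t^2)" by (intro mult_left_mono) auto
    then have "\<bar>R\<bar> \<le> m * (16 * t^2)" using Rb by linarith
    then show ?thesis using qb q0 unfolding abs_le_iff by (intro conjI) linarith+
  qed
  have "\<bar>(1/m) * P * (q + R)\<bar> \<le> (1/m) * (6 * t) * (m * (18 * t^2))"
    unfolding abs_mult using Pb qRb mpos by (intro mult_mono) auto
  also have "\<dots> = 108 * t^3" using mpos by (simp add: field_simps power3_eq_cube power2_eq_square)
  finally have b3: "\<bar>(1/m) * P * (q + R)\<bar> \<le> 108 * t^3" .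
  have b2: "\<bar>R / m\<bar> \<le> 16 * t^3" using Rb mpos by (simp add: field_simps)
  have num: "\<bar>exp (u b) - T * D\<bar> \<le> 140 * t^3"
  proof -
    have tri: "\<bar>x - y - z\<bar> \<le> \<bar>x\<bar> + \<bar>y\<bar> + \<bar>z\<bar>" for x y z :: real by arith
    show ?thesis unfolding key using tri[of "r b" "R / m" "(1/m) * P * (q + R)"] rb[OF b] b2 b3 by linarith
  qed
  have "exp (u b) / D - T = (exp (u b) - T * D) / D" using Dpos by (simp add: field_simps)
  then have "\<bar>exp (u b) / D - T\<bar> = \<bar>exp (u b) - T * D\<bar> / D" using Dpos by simp
  also have "\<dots> \<le> (140 * t^3) / (m / 9)"
    using num Dlow Dpos mpos t by (intro frac_le) auto
  also have "\<dots> \<le> 1260 * t^3"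
  proof -
    have "(140 * t^3) / (m / 9) = 1260 * t^3 / m" by (simp add: field_simps)
    also have "\<dots> \<le> 1260 * t^3" 
    proof -
      have "1 \<le> real m" using m by simp
      then have "t^3 * 1 \<le> t^3 * real m" using t by (intro mult_left_mono) auto
      then show ?thesis using mpos by (simp add: field_simps)
    qed
    finally show ?thesis .
  qed
  finally show ?thesis unfolding T_def D_def .
qed



definition jet :: "real \<Rightarrow> real \<Rightarrow> real \<Rightarrow> real \<Rightarrow> real \<Rightarrow> real \<Rightarrow> bool" where
  "jet K t x x0 x1 x2 \<longleftrightarrow> \<bar>x0\<bar> \<le> K \<and> \<bar>x1\<bar> \<le> K * t \<and> \<bar>x2\<bar> \<le> K * t^2 \<and> (t \<le> 1 \<longrightarrow> \<bar>x - x0 - x1 - x2\<bar> \<le> K * t^3)"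

lemma jet_mult:
  assumes K: "K \<ge> 0" and t: "t \<ge> 0"
    and jx: "jet K t x x0 x1 x2" and jy: "jet K t y y0 y1 y2"
  shows "jet (10 * K^2) t (x * y) (x0 * y0) (x0 * y1 + x1 * y0) (x0 * y2 + x1 * y1 + x2 * y0)"
proof -
  from jx have x0: "\<bar>x0\<bar> \<le> K" and x1: "\<bar>x1\<bar> \<le> K * t" and x2: "\<bar>x2\<bar> \<le> K * t^2"
    and ex: "t \<le> 1 \<Longrightarrow> \<bar>x - x0 - x1 - x2\<bar> \<le> K * t^3" unfolding jet_def by auto
  from jy have y0: "\<bar>y0\<bar> \<le> K" and y1: "\<bar>y1\<bar> \<le> K * t" and y2: "\<bar>y2\<bar> \<le> K * t^2"
    and ey: "t \<le> 1 \<Longrightarrow> \<bar>y - y0 - y1 - y2\<bar> \<le> K * t^3" unfolding jet_def by auto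
  have K2: "K^2 \<ge> 0" by simp
  have a0: "\<bar>x0 * y0\<bar> \<le> 10 * K^2"
  proof -
    have "\<bar>x0 * y0\<bar> \<le> K * K" unfolding abs_mult using x0 y0 K by (intro mult_mono) auto
    then show ?thesis using K2 by (simp add: power2_eq_square)
  qed
  have a1: "\<bar>x0 * y1 + x1 * y0\<bar> \<le> 10 * K^2 * t"
  proof -
    have "\<bar>x0 * y1\<bar> \<le> K * (K * t)" unfolding abs_mult using x0 y1 K by (intro mult_mono) auto
    moreover have "\<bar>x1 * y0\<bar> \<le> (K * t) * K" unfolding abs_mult using x1 y0 K t by (intro mult_mono) auto
    moreover have "K^2 * t \<ge> 0" using t by simp
    ultimately show ?thesis by (simp add: power2_eq_square algebra_simps abs_le_iff; linarith?)
  qed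
  have a2: "\<bar>x0 * y2 + x1 * y1 + x2 * y0\<bar> \<le> 10 * K^2 * t^2"
  proof -
    have "\<bar>x0 * y2\<bar> \<le> K * (K * t^2)" unfolding abs_mult using x0 y2 K by (intro mult_mono) auto
    moreover have "\<bar>x1 * y1\<bar> \<le> (K * t) * (K * t)" unfolding abs_mult using x1 y1 K t by (intro mult_mono) auto
    moreover have "\<bar>x2 * y0\<bar> \<le> (K * t^2) * K" unfolding abs_mult using x2 y0 K t by (intro mult_mono) auto
    moreover have "K^2 * t^2 \<ge> 0" using t by simp
    ultimately show ?thesis by (simp add: power2_eq_square algebra_simps abs_le_iff; linarith?)
  qed
  have a3: "\<bar>x * y - x0 * y0 - (x0 * y1 + x1 * y0) - (x0 * y2 + x1 * y1 + x2 * y0)\<bar> \<le> 10 * K^2 * t^3"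
    if t1: "t \<le> 1"
  proof -
    define ex' where "ex' = x - x0 - x1 - x2"
    define ey' where "ey' = y - y0 - y1 - y2"
    have ex1: "\<bar>ex'\<bar> \<le> K * t^3" using ex[OF t1] unfolding ex'_def .
    have ey1: "\<bar>ey'\<bar> \<le> K * t^3" using ey[OF t1] unfolding ey'_def .
    have tp: "t^2 \<le> 1" "t^3 \<le> 1" "t^3 \<le> t^2" "t^2 * t = t^3" "t^4 \<le> t^3" "t * t^2 = t^3" "t^2 * t^2 = t^4"
      using t t1 power_le_one[of t 2] power_le_one[of t 3] power_decreasing[of 2 3 t] power_decreasing[of 3 4 t]
      by (simp_all add: eval_nat_numeral)
    have Kt: "K * t \<le> K" "K * t^2 \<le> K" "K * t^3 \<le> K" using mult_left_le[OF t1 K] mult_left_le[OF tp(1) K] mult_left_le[OF tp(2) K] by simp_all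
    have xb: "\<bar>x\<bar> \<le> 4 * K"
    proof -
      have "x = x0 + x1 + x2 + ex'" unfolding ex'_def by simp
      then show ?thesis using x0 x1 x2 ex1 Kt by (simp add: abs_le_iff; linarith?)
    qed
    have ysb: "\<bar>y0 + y1 + y2\<bar> \<le> 3 * K" using y0 y1 y2 Kt by (simp add: abs_le_iff; linarith?)
    have eq: "x * y - x0 * y0 - (x0 * y1 + x1 * y0) - (x0 * y2 + x1 * y1 + x2 * y0)
        = x * ey' + ex' * (y0 + y1 + y2) + x1 * y2 + x2 * y1 + x2 * y2"
      unfolding ex'_def ey'_def by (simp add: algebra_simps)
    have b1: "\<bar>x * ey'\<bar> \<le> (4 * K) * (K * t^3)" unfolding abs_mult using xb ey1 K by (intro mult_mono) auto
    have b2: "\<bar>ex' * (y0 + y1 + y2)\<bar> \<le> (K * t^3) * (3 * K)" unfolding abs_mult using ex1 ysb K t by (intro mult_mono) auto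
    have b3: "\<bar>x1 * y2\<bar> \<le> (K * t) * (K * t^2)" unfolding abs_mult using x1 y2 K t by (intro mult_mono) auto
    have b4: "\<bar>x2 * y1\<bar> \<le> (K * t^2) * (K * t)" unfolding abs_mult using x2 y1 K t by (intro mult_mono) auto
    have b5: "\<bar>x2 * y2\<bar> \<le> (K * t^2) * (K * t^2)" unfolding abs_mult using x2 y2 K t by (intro mult_mono) auto
    have c3: "(K * t) * (K * t^2) = K^2 * t^3" "(K * t^2) * (K * t) = K^2 * t^3"
      "(4 * K) * (K * t^3) = 4 * (K^2 * t^3)" "(K * t^3) * (3 * K) = 3 * (K^2 * t^3)"
      by (simp_all add: power2_eq_square power3_eq_cube algebra_simps)
    have c5: "(K * t^2) * (K * t^2) \<le> K^2 * t^3"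
    proof -
      have "(K * t^2) * (K * t^2) = K^2 * t^4" by (simp add: power2_eq_square algebra_simps eval_nat_numeral)
      also have "\<dots> \<le> K^2 * t^3" by (intro mult_left_mono tp(5)) simp
      finally show ?thesis .
    qed
    have tri: "\<bar>a + b + c + d + e\<bar> \<le> \<bar>a\<bar> + \<bar>b\<bar> + \<bar>c\<bar> + \<bar>d\<bar> + \<bar>e\<bar>" for a b c d e :: real by arith
    show ?thesis unfolding eq
      using tri[of "x * ey'" "ex' * (y0 + y1 + y2)" "x1 * y2" "x2 * y1" "x2 * y2"] b1 b2 b3 b4 b5 c3 c5
      by linarith
  qed
  show ?thesis unfolding jet_def using a0 a1 a2 a3 by auto
qed

lemma jet_mono:
  assumes "jet K t x x0 x1 x2" "K \<le> K'" "t \<ge> 0"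
  shows "jet K' t x x0 x1 x2"
proof -
  have "K * t \<le> K' * t" "K * t^2 \<le> K' * t^2" "K * t^3 \<le> K' * t^3" using assms by (auto intro: mult_right_mono)
  then show ?thesis using assms unfolding jet_def by force
qed

definition Hx :: "real \<Rightarrow> real \<Rightarrow> real \<Rightarrow> real \<Rightarrow> real \<Rightarrow> real \<Rightarrow> real \<Rightarrow> real \<Rightarrow> real \<Rightarrow> real \<Rightarrow> real \<Rightarrow> real \<Rightarrow> real" where
  "Hx d1 d2 d3 d4 l1 l2 l3 l4 q1 q2 q3 q4 =
     d1*d2*d3*d4
   + (l1*d2*d3*d4 + d1*l2*d3*d4 + d1*d2*l3*d4 + d1*d2*d3*l4)
   + (q1*d2*d3*d4 + d1*q2*d3*d4 + d1*d2*q3*d4 + d1*d2*d3*q4)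
   + (l1*l2*d3*d4 + l1*d2*l3*d4 + l1*d2*d3*l4 + d1*l2*l3*d4 + d1*l2*d3*l4 + d1*d2*l3*l4)"

definition KD :: real where "KD = 16 + 3 * (10 * (10 * (10 * 1260^2)^2)^2)"

lemma jet_entry:
  assumes t: "t \<ge> 0" and d: "0 \<le> d" "d \<le> 1" and l: "\<bar>l\<bar> \<le> 2 * t" and q: "\<bar>q\<bar> \<le> 4 * t^2"
    and e: "t \<le> 1 \<Longrightarrow> \<bar>s - p - l - q\<bar> \<le> 1260 * t^3"
  shows "jet 1260 t (d + s - p) d l q"
  unfolding jet_def using assms by auto

lemma four_prod_bound:
  assumes t: "t \<ge> 0" and p: "0 < p" "p \<le> 1"
    and d1: "0 \<le> d1" "d1 \<le> 1" and d2: "0 \<le> d2" "d2 \<le> 1" and d3: "0 \<le> d3" "d3 \<le> 1" and d4: "0 \<le> d4" "d4 \<le> 1"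
    and s1: "0 \<le> s1" "s1 \<le> 1" and s2: "0 \<le> s2" "s2 \<le> 1" and s3: "0 \<le> s3" "s3 \<le> 1" and s4: "0 \<le> s4" "s4 \<le> 1"
    and l1: "\<bar>l1\<bar> \<le> 2 * t" and l2: "\<bar>l2\<bar> \<le> 2 * t" and l3: "\<bar>l3\<bar> \<le> 2 * t" and l4: "\<bar>l4\<bar> \<le> 2 * t"
    and q1: "\<bar>q1\<bar> \<le> 4 * t^2" and q2: "\<bar>q2\<bar> \<le> 4 * t^2" and q3: "\<bar>q3\<bar> \<le> 4 * t^2" and q4: "\<bar>q4\<bar> \<le> 4 * t^2"
    and e1: "t \<le> 1 \<Longrightarrow> \<bar>s1 - p - l1 - q1\<bar> \<le> 1260 * t^3"
    and e2: "t \<le> 1 \<Longrightarrow> \<bar>s2 - p - l2 - q2\<bar> \<le> 1260 * t^3"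
    and e3: "t \<le> 1 \<Longrightarrow> \<bar>s3 - p - l3 - q3\<bar> \<le> 1260 * t^3"
    and e4: "t \<le> 1 \<Longrightarrow> \<bar>s4 - p - l4 - q4\<bar> \<le> 1260 * t^3"
  shows "\<bar>(d1 + s1 - p) * (d2 + s2 - p) * (d3 + s3 - p) * (d4 + s4 - p) - Hx d1 d2 d3 d4 l1 l2 l3 l4 q1 q2 q3 q4\<bar> \<le> KD * t^3"
proof -
  define K1 :: real where "K1 = 10 * 1260^2"
  define K2 :: real where "K2 = 10 * K1^2"
  define K3 :: real where "K3 = 10 * K2^2"
  have KK: "1260 \<le> K1" "K1 \<le> K2" "K2 \<le> K3" "0 \<le> K1" "0 \<le> K2" "0 \<le> K3"
    unfolding K3_def K2_def K1_def by simp_all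
  have j1: "jet 1260 t (d1 + s1 - p) d1 l1 q1" using jet_entry[OF t d1 l1 q1 e1] .
  have j2: "jet 1260 t (d2 + s2 - p) d2 l2 q2" using jet_entry[OF t d2 l2 q2 e2] .
  have j3: "jet 1260 t (d3 + s3 - p) d3 l3 q3" using jet_entry[OF t d3 l3 q3 e3] .
  have j4: "jet 1260 t (d4 + s4 - p) d4 l4 q4" using jet_entry[OF t d4 l4 q4 e4] .
  have j12: "jet K1 t ((d1 + s1 - p) * (d2 + s2 - p)) (d1*d2) (d1*l2 + l1*d2) (d1*q2 + l1*l2 + q1*d2)"
    unfolding K1_def by (rule jet_mult[OF _ t j1 j2]) simp
  have j123: "jet K2 t ((d1 + s1 - p) * (d2 + s2 - p) * (d3 + s3 - p)) (d1*d2*d3) (d1*d2*l3 + (d1*l2 + l1*d2)*d3)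
       (d1*d2*q3 + (d1*l2 + l1*d2)*l3 + (d1*q2 + l1*l2 + q1*d2)*d3)"
    unfolding K2_def by (rule jet_mult[OF KK(4) t j12 jet_mono[OF j3 KK(1) t]])
  have j1234: "jet K3 t ((d1 + s1 - p) * (d2 + s2 - p) * (d3 + s3 - p) * (d4 + s4 - p)) (d1*d2*d3*d4)
       (d1*d2*d3*l4 + (d1*d2*l3 + (d1*l2 + l1*d2)*d3)*d4)
       (d1*d2*d3*q4 + (d1*d2*l3 + (d1*l2 + l1*d2)*d3)*l4 + (d1*d2*q3 + (d1*l2 + l1*d2)*l3 + (d1*q2 + l1*l2 + q1*d2)*d3)*d4)"
    unfolding K3_def by (rule jet_mult[OF KK(5) t j123 jet_mono[OF j4 _ t]]) (use KK in linarith)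
  define P where "P = (d1 + s1 - p) * (d2 + s2 - p) * (d3 + s3 - p) * (d4 + s4 - p)"
  define c0 where "c0 = d1*d2*d3*d4"
  define c1 where "c1 = d1*d2*d3*l4 + (d1*d2*l3 + (d1*l2 + l1*d2)*d3)*d4"
  define c2 where "c2 = d1*d2*d3*q4 + (d1*d2*l3 + (d1*l2 + l1*d2)*d3)*l4 + (d1*d2*q3 + (d1*l2 + l1*d2)*l3 + (d1*q2 + l1*l2 + q1*d2)*d3)*d4"
  have jj: "jet K3 t P c0 c1 c2" using j1234 unfolding P_def c0_def c1_def c2_def .
  have Heq: "Hx d1 d2 d3 d4 l1 l2 l3 l4 q1 q2 q3 q4 = c0 + c1 + c2"
    unfolding Hx_def c0_def c1_def c2_def by (simp add: algebra_simps)
  have KDe: "KD = 16 + 3 * K3" unfolding KD_def K3_def K2_def K1_def by simp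
  show ?thesis
  proof (cases "t \<le> 1")
    case True
    then have "\<bar>P - c0 - c1 - c2\<bar> \<le> K3 * t^3" using jj unfolding jet_def by auto
    moreover have "K3 * t^3 \<le> KD * t^3" unfolding KDe using t KK by (intro mult_right_mono) auto
    ultimately show ?thesis unfolding Heq P_def[symmetric] by (simp add: algebra_simps)
  next
    case False
    then have t1: "1 \<le> t" by simp
    have tp: "1 \<le> t^3" "t \<le> t^3" "t^2 \<le> t^3" using t1
      by (simp_all add: one_le_power power_increasing[of 1 3 t, simplified] power_increasing[of 2 3 t, simplified])
    have Ab: "\<bar>d + s - p\<bar> \<le> 2" if "0 \<le> d" "d \<le> 1" "0 \<le> s" "s \<le> 1" for d s
      using that p by (simp add: abs_le_iff)
    have "\<bar>P\<bar> \<le> 2 * 2 * 2 * 2" unfolding P_def abs_mult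
      using Ab[OF d1 s1] Ab[OF d2 s2] Ab[OF d3 s3] Ab[OF d4 s4] by (intro mult_mono) auto
    moreover have "\<bar>c0\<bar> \<le> K3" "\<bar>c1\<bar> \<le> K3 * t" "\<bar>c2\<bar> \<le> K3 * t^2" using jj unfolding jet_def by auto
    moreover have "K3 \<le> K3 * t^3" "K3 * t \<le> K3 * t^3" "K3 * t^2 \<le> K3 * t^3"
      using tp KK by (auto intro: mult_left_mono)
    moreover have "16 \<le> 16 * t^3" using tp by simp
    moreover have "\<bar>P - (c0 + c1 + c2)\<bar> \<le> \<bar>P\<bar> + \<bar>c0\<bar> + \<bar>c1\<bar> + \<bar>c2\<bar>" by arith
    ultimately show ?thesis unfolding Heq P_def[symmetric] KDe by (simp add: algebra_simps)
  qed
qed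



lemma gw_prob: "prob_space (gauss_weights n nk)"
  unfolding gw_def by (intro prob_space_PiM NN_prob)

lemma coord_meas[measurable]: "(\<lambda>w. w p) \<in> borel_measurable (gauss_weights n nk)"
proof (cases "p \<in> Iset n nk")
  case True
  then show ?thesis unfolding gw_def by measurable
next
  case False
  have "(\<lambda>w. undefined :: real) \<in> borel_measurable (gauss_weights n nk)" by simp
  moreover have "\<And>w. w \<in> space (gauss_weights n nk) \<Longrightarrow> undefined = w p"
    using False unfolding gw_def space_PiM by (metis PiE_arb)
  ultimately show ?thesis by (rule measurable_cong[THEN iffD1, rotated])
qed

lemma Am_meas: "(\<lambda>w. Am m n nk X \<tau> (WKof w) (WQof w) a b) \<in> borel_measurable (gauss_weights n nk)"
  unfolding Am_def softmax_row_def Ym_def WKof_def WQof_def by measurable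

lemma softmax_bounds:
  assumes "b < m"
  shows "0 \<le> softmax_row m Z a b" "softmax_row m Z a b \<le> 1"
proof -
  have "exp (Z a b) \<le> (\<Sum>c<m. exp (Z a c))"
    using assms by (intro member_le_sum) auto
  moreover have "0 < exp (Z a b)" by simp
  ultimately have D: "0 < (\<Sum>c<m. exp (Z a c))" by linarith
  show "0 \<le> softmax_row m Z a b" unfolding softmax_row_def using D by simp
  show "softmax_row m Z a b \<le> 1" unfolding softmax_row_def using D \<open>exp (Z a b) \<le> _\<close> by (simp add: divide_le_eq_1)
qed

lemma Am_bound:
  assumes "b < m"
  shows "\<bar>Am m n nk X \<tau> W1 W2 a b\<bar> \<le> 2"
proof -
  have "1 \<le> real m" using assms by simp
  then have "1 / real m \<le> 1" "0 \<le> 1 / real m" by simp_all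
  moreover have "\<bar>k + s - p\<bar> \<le> 2" if "0 \<le> s" "s \<le> 1" "0 \<le> p" "p \<le> 1" "k = 0 \<or> k = 1" for k s p :: real
    using that by (auto simp: abs_le_iff)
  moreover have "kron a b = 0 \<or> kron a b = 1" unfolding kron_def by auto
  ultimately show ?thesis using softmax_bounds[OF assms, of "\<lambda>c e. Ym n nk X W1 W2 c e / \<tau>" a]
    unfolding Am_def by blast
qed



definition lq :: "nat \<Rightarrow> nat \<Rightarrow> nat \<Rightarrow> (nat \<Rightarrow> nat \<Rightarrow> real) \<Rightarrow> real \<Rightarrow> (nat \<times> nat \<times> bool \<Rightarrow> real) \<Rightarrow> nat \<Rightarrow> nat \<Rightarrow> real" where
  "lq m n nk X \<tau> w a b = (1 / real m) * (Yc m n nk X w a b / \<tau>)"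

definition qq :: "nat \<Rightarrow> nat \<Rightarrow> nat \<Rightarrow> (nat \<Rightarrow> nat \<Rightarrow> real) \<Rightarrow> real \<Rightarrow> (nat \<times> nat \<times> bool \<Rightarrow> real) \<Rightarrow> nat \<Rightarrow> nat \<Rightarrow> real" where
  "qq m n nk X \<tau> w a b = (1 / (2 * real m)) * ((Yc m n nk X w a b / \<tau>)^2 - (1 / real m) * (\<Sum>c<m. (Yc m n nk X w a c / \<tau>)^2))"

lemma entry_bounds:
  assumes b: "b < m" and tau: "\<tau> > 0" and t: "t \<ge> 0"
    and xb: "\<And>c. c < m \<Longrightarrow> \<bar>YY n nk X w a c / \<tau>\<bar> \<le> t"
  shows "\<bar>lq m n nk X \<tau> w a b\<bar> \<le> 2 * t"
    "\<bar>qq m n nk X \<tau> w a b\<bar> \<le> 4 * t^2"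
    "t \<le> 1 \<Longrightarrow> \<bar>softmax_row m (\<lambda>c e. Ym n nk X (WKof w) (WQof w) c e / \<tau>) a b - 1 / real m
        - lq m n nk X \<tau> w a b - qq m n nk X \<tau> w a b\<bar> \<le> 1260 * t^3"
proof -
  have m: "m > 0" using b by simp
  have mpos: "real m > 0" using m by simp
  have m1: "1 \<le> real m" using m by simp
  define x where "x c = YY n nk X w a c / \<tau>" for c
  define xm where "xm = (1 / real m) * (\<Sum>c<m. x c)"
  define u where "u c = Yc m n nk X w a c / \<tau>" for c
  have sx: "(\<Sum>c<m. x c) = (\<Sum>c<m. YY n nk X w a c) / \<tau>" unfolding x_def by (simp add: sum_divide_distrib)
  have u_eq: "u c = x c - xm" for c
    unfolding u_def xm_def sx unfolding x_def Yc_def by (simp add: diff_divide_distrib)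
  have xmb: "\<bar>xm\<bar> \<le> t"
  proof -
    have "\<bar>\<Sum>c<m. x c\<bar> \<le> (\<Sum>c<m. \<bar>x c\<bar>)" by (rule sum_abs)
    also have "\<dots> \<le> (\<Sum>c<m. t)" using xb unfolding x_def by (intro sum_mono) auto
    finally have "\<bar>\<Sum>c<m. x c\<bar> \<le> real m * t" by simp
    then show ?thesis unfolding xm_def using mpos by (simp add: abs_mult field_simps)
  qed
  have ub: "\<bar>u c\<bar> \<le> 2 * t" if "c < m" for c
  proof -
    have "\<bar>x c\<bar> \<le> t" using xb[OF that] unfolding x_def .
    then show ?thesis using xmb unfolding u_eq by arith
  qed
  have us: "(\<Sum>c<m. u c) = 0"
    unfolding u_eq using mpos by (simp add: sum_subtractf xm_def)
  have usq: "(u c)^2 \<le> 4 * t^2" if "c < m" for c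
  proof -
    have "(u c)^2 = \<bar>u c\<bar>^2" by simp
    also have "\<dots> \<le> (2*t)^2" using ub[OF that] by (intro power_mono) auto
    finally show ?thesis by (simp add: power_mult_distrib)
  qed
  have lq_eq: "lq m n nk X \<tau> w a b = (1 / real m) * u b" unfolding lq_def u_def ..
  have qq_eq: "qq m n nk X \<tau> w a b = (1 / (2 * real m)) * ((u b)^2 - (1 / real m) * (\<Sum>c<m. (u c)^2))"
    unfolding qq_def u_def ..
  show "\<bar>lq m n nk X \<tau> w a b\<bar> \<le> 2 * t"
  proof -
    have "\<bar>lq m n nk X \<tau> w a b\<bar> = \<bar>u b\<bar> / real m" unfolding lq_eq using mpos by (simp add: abs_mult)
    also have "\<dots> \<le> \<bar>u b\<bar>" using m1 by (simp add: divide_le_eq mult_le_cancel_left1)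
    finally show ?thesis using ub[OF b] by linarith
  qed
  show "\<bar>qq m n nk X \<tau> w a b\<bar> \<le> 4 * t^2"
  proof -
    have s1: "(\<Sum>c<m. (u c)^2) \<le> real m * (4 * t^2)"
    proof -
      have "(\<Sum>c<m. (u c)^2) \<le> (\<Sum>c<m. 4 * t^2)" by (intro sum_mono usq) auto
      then show ?thesis by simp
    qed
    have s0: "0 \<le> (\<Sum>c<m. (u c)^2)" by (intro sum_nonneg) auto
    have s2: "(1 / real m) * (\<Sum>c<m. (u c)^2) \<le> 4 * t^2" using s1 mpos by (simp add: field_simps)
    have s3: "0 \<le> (1 / real m) * (\<Sum>c<m. (u c)^2)" using s0 mpos by simp
    define D where "D = (u b)^2 - (1 / real m) * (\<Sum>c<m. (u c)^2)"
    have Db: "\<bar>D\<bar> \<le> 4 * t^2" unfolding D_def using usq[OF b] s2 s3 zero_le_power2[of "u b"]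
      unfolding abs_le_iff by (intro conjI) linarith+
    have "\<bar>qq m n nk X \<tau> w a b\<bar> = \<bar>D\<bar> / (2 * real m)" unfolding qq_eq D_def[symmetric] using mpos by (simp add: abs_mult)
    also have "\<dots> \<le> \<bar>D\<bar>" using m1 by (simp add: divide_le_eq mult_le_cancel_left1)
    finally show ?thesis using Db by linarith
  qed
  assume t1: "t \<le> 1"
  have sm_eq: "softmax_row m (\<lambda>c e. Ym n nk X (WKof w) (WQof w) c e / \<tau>) a b = exp (u b) / (\<Sum>c<m. exp (u c))"
  proof -
    have "softmax_row m (\<lambda>c e. Ym n nk X (WKof w) (WQof w) c e / \<tau>) a b = exp (x b) / (\<Sum>c<m. exp (x c))"
      unfolding softmax_row_def x_def YY_def ..
    also have "\<dots> = (exp xm * exp (u b)) / (exp xm * (\<Sum>c<m. exp (u c)))"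
      unfolding u_eq by (simp add: sum_distrib_left exp_diff)
    also have "\<dots> = exp (u b) / (\<Sum>c<m. exp (u c))" by simp
    finally show ?thesis .
  qed
  have core: "\<bar>exp (u b) / (\<Sum>c<m. exp (u c)) - (1 / m) * (1 + u b + (u b)^2 / 2 - (1/2) * (\<Sum>c<m. (u c)^2) / m)\<bar> \<le> 1260 * t^3"
    by (rule sm_core[OF m b t t1 ub us])
  have "(1 / m) * (1 + u b + (u b)^2 / 2 - (1/2) * (\<Sum>c<m. (u c)^2) / m) = 1 / real m + lq m n nk X \<tau> w a b + qq m n nk X \<tau> w a b"
    unfolding lq_eq qq_eq using mpos by (simp add: field_simps)
  then show "\<bar>softmax_row m (\<lambda>c e. Ym n nk X (WKof w) (WQof w) c e / \<tau>) a b - 1 / real m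
        - lq m n nk X \<tau> w a b - qq m n nk X \<tau> w a b\<bar> \<le> 1260 * t^3"
    using core unfolding sm_eq by (simp add: algebra_simps)
qed



definition Ssq :: "nat \<Rightarrow> nat \<Rightarrow> (nat \<times> nat \<times> bool \<Rightarrow> real) \<Rightarrow> real" where
  "Ssq n nk w = (\<Sum>p\<in>Iset n nk. (w p)^2)"

definition Xs :: "nat \<Rightarrow> nat \<Rightarrow> (nat \<Rightarrow> nat \<Rightarrow> real) \<Rightarrow> real" where
  "Xs m n X = (\<Sum>a<m. \<Sum>i<n. \<bar>X a i\<bar>)"

definition Kc :: "nat \<Rightarrow> nat \<Rightarrow> nat \<Rightarrow> (nat \<Rightarrow> nat \<Rightarrow> real) \<Rightarrow> real" where
  "Kc m n nk X = real n * real n * real nk * (Xs m n X * Xs m n X / real n) * 2"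

lemma Xs_ge: "a < m \<Longrightarrow> i < n \<Longrightarrow> \<bar>X a i\<bar> \<le> Xs m n X"
proof -
  assume a: "a < m" and i: "i < n"
  have "\<bar>X a i\<bar> \<le> (\<Sum>i<n. \<bar>X a i\<bar>)" using i by (intro member_le_sum) auto
  also have "\<dots> \<le> Xs m n X" unfolding Xs_def using a by (intro member_le_sum) (auto intro: sum_nonneg)
  finally show ?thesis .
qed

lemma Xs_nonneg: "0 \<le> Xs m n X"
  unfolding Xs_def by (intro sum_nonneg) auto

lemma abs_prod_le: "\<bar>x * y\<bar> \<le> x^2 + (y::real)^2"
proof -
  have "0 \<le> (\<bar>x\<bar> - \<bar>y\<bar>)^2" by simp
  then have A: "2 * (\<bar>x\<bar> * \<bar>y\<bar>) \<le> x^2 + y^2" by (simp add: power2_eq_square algebra_simps)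
  have B: "0 \<le> \<bar>x\<bar> * \<bar>y\<bar>" by simp
  from A B have "\<bar>x\<bar> * \<bar>y\<bar> \<le> x^2 + y^2" by linarith
  then show ?thesis by (simp add: abs_mult)
qed

lemma Ssq_ge: "p \<in> Iset n nk \<Longrightarrow> (w p)^2 \<le> Ssq n nk w"
  unfolding Ssq_def by (intro member_le_sum) auto

lemma Ssq_nonneg: "0 \<le> Ssq n nk w"
  unfolding Ssq_def by (intro sum_nonneg) auto

lemma Kc_nonneg: "0 \<le> Kc m n nk X"
  unfolding Kc_def by simp

lemma YY_bound:
  assumes a: "a < m" and b: "b < m"
  shows "\<bar>YY n nk X w a b\<bar> \<le> Kc m n nk X * Ssq n nk w"
proof -
  define c where "c = Xs m n X * Xs m n X / real n"
  define S where "S = Ssq n nk w"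
  have tm: "\<bar>(X a i * X b j / n) * (w (i,k,True) * w (j,k,False))\<bar> \<le> c * (2 * S)"
    if i: "i < n" and j: "j < n" and k: "k < nk" for i j k
  proof -
    have "\<bar>X a i * X b j\<bar> \<le> Xs m n X * Xs m n X"
      unfolding abs_mult using Xs_ge[OF a i, of X] Xs_ge[OF b j, of X] Xs_nonneg[of m n X] by (intro mult_mono) auto
    then have h1: "\<bar>X a i * X b j / n\<bar> \<le> c" unfolding c_def by (simp add: divide_right_mono)
    have p1: "(i,k,True) \<in> Iset n nk" "(j,k,False) \<in> Iset n nk" using i j k unfolding Iset_def by auto
    have "\<bar>w (i,k,True) * w (j,k,False)\<bar> \<le> (w (i,k,True))^2 + (w (j,k,False))^2"
      by (rule abs_prod_le)
    also have "\<dots> \<le> 2 * S" using Ssq_ge[OF p1(1), of w] Ssq_ge[OF p1(2), of w] unfolding S_def by linarith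
    finally have h2: "\<bar>w (i,k,True) * w (j,k,False)\<bar> \<le> 2 * S" .
    have "c \<ge> 0" unfolding c_def by simp
    then show ?thesis unfolding abs_mult[of "X a i * X b j / n"] using h1 h2 by (intro mult_mono) auto
  qed
  have "\<bar>YY n nk X w a b\<bar> \<le> (\<Sum>i<n. \<Sum>j<n. \<Sum>k<nk. \<bar>(X a i * X b j / n) * (w (i,k,True) * w (j,k,False))\<bar>)"
    unfolding YY_exp by (rule order_trans[OF sum_abs sum_mono], rule order_trans[OF sum_abs sum_mono], rule sum_abs)
  also have "\<dots> \<le> (\<Sum>i<n. \<Sum>j<n. \<Sum>k<nk. c * (2 * S))"
    by (intro sum_mono tm) auto
  also have "\<dots> = Kc m n nk X * Ssq n nk w" unfolding Kc_def c_def S_def by simp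
  finally show ?thesis .
qed

lemma Ssq3_int: "integrable (gauss_weights n nk) (\<lambda>w. (Ssq n nk w)^3)"
proof -
  have eq: "(Ssq n nk w)^3 = (\<Sum>p\<in>Iset n nk. \<Sum>q\<in>Iset n nk. \<Sum>r\<in>Iset n nk.
      gmono (\<lambda>x. (dl p x + dl p x) + (dl q x + dl q x) + (dl r x + dl r x)) n nk w)" for w
  proof -
    have "(Ssq n nk w)^3 = (\<Sum>p\<in>Iset n nk. \<Sum>q\<in>Iset n nk. \<Sum>r\<in>Iset n nk. (w r)^2 * ((w q)^2 * (w p)^2))"
      unfolding Ssq_def power3_eq_cube sum_distrib_right sum_distrib_left by (simp add: mult.assoc)
    also have "\<dots> = (\<Sum>p\<in>Iset n nk. \<Sum>q\<in>Iset n nk. \<Sum>r\<in>Iset n nk.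
      gmono (\<lambda>x. (dl p x + dl p x) + (dl q x + dl q x) + (dl r x + dl r x)) n nk w)"
      by (intro sum.cong refl) (simp add: gmono_add gmono_dl power2_eq_square mult_ac)
    finally show ?thesis .
  qed
  show ?thesis unfolding eq by (intro isum3_int mono_int)
qed



lemma lq_alt: "lq m n nk X \<tau> w a b = (1 / (real m * \<tau>)) * Yc m n nk X w a b"
  unfolding lq_def by simp

lemma qq_alt: "\<tau> \<noteq> 0 \<Longrightarrow> m > 0 \<Longrightarrow> qq m n nk X \<tau> w a b = (1 / (2 * real m * \<tau>^2)) *
   (Yc m n nk X w a b * Yc m n nk X w a b - (1 / real m) * (\<Sum>c<m. Yc m n nk X w a c * Yc m n nk X w a c))"
  unfolding qq_def by (simp add: power_divide power2_eq_square sum_divide_distrib[symmetric] field_simps)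

lemma lq_int: "integrable (gauss_weights n nk) (\<lambda>w. lq m n nk X \<tau> w a b)"
  unfolding lq_alt by (intro integrable_mult_right Yc_int)

lemma lq_integral: "(\<integral>w. lq m n nk X \<tau> w a b \<partial>gauss_weights n nk) = 0"
  unfolding lq_alt by (simp add: Yc_integral)

lemma lq2_int: "integrable (gauss_weights n nk) (\<lambda>w. lq m n nk X \<tau> w a b * lq m n nk X \<tau> w c d)"
proof -
  have "(\<lambda>w. lq m n nk X \<tau> w a b * lq m n nk X \<tau> w c d) = (\<lambda>w. (1 / (real m * \<tau>))^2 * (Yc m n nk X w a b * Yc m n nk X w c d))"
    unfolding lq_alt by (simp add: power2_eq_square mult_ac)
  then show ?thesis by (simp add: Yc2_int)
qed

lemma lq2_integral: "(\<integral>w. lq m n nk X \<tau> w a b * lq m n nk X \<tau> w c d \<partial>gauss_weights n nk) =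
   (1 / (real m * \<tau>))^2 * (real nk * S1 m n X a b c d)"
proof -
  have "(\<lambda>w. lq m n nk X \<tau> w a b * lq m n nk X \<tau> w c d) = (\<lambda>w. (1 / (real m * \<tau>))^2 * (Yc m n nk X w a b * Yc m n nk X w c d))"
    unfolding lq_alt by (simp add: power2_eq_square mult_ac)
  then show ?thesis by (simp add: Yc2_int Yc2_integral)
qed

lemma qq_int: "\<tau> \<noteq> 0 \<Longrightarrow> m > 0 \<Longrightarrow> integrable (gauss_weights n nk) (\<lambda>w. qq m n nk X \<tau> w a b)"
  by (subst qq_alt, assumption, assumption)+ (intro integrable_mult_right Bochner_Integration.integrable_diff Bochner_Integration.integrable_sum Yc2_int)

lemma S2_from_S1:
  assumes "m > 0"
  shows "S1 m n X a b a b - (1 / real m) * (\<Sum>c<m. S1 m n X a c a c) = S2 m n X a b"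
proof -
  have mpos: "real m > 0" using assms by simp
  have e1: "(1 / real m) * (\<Sum>c<m. Vxb m n X c) = Vxx m n X"
    unfolding Vxb_def Vxx_def by (simp add: sum_divide_distrib[symmetric] power2_eq_square)
  have "(1 / real m) * (\<Sum>c<m. S1 m n X a c a c) = Vm n X a a * (Vbar m n X - 2 * ((1 / real m) * (\<Sum>c<m. Vxb m n X c)) + Vxx m n X)"
    unfolding S1_def Vbar_def using mpos
    by (simp add: sum_distrib_left[symmetric] sum.distrib sum_subtractf algebra_simps sum_distrib_right[symmetric])
  then show ?thesis unfolding e1 unfolding S1_def S2_def by (simp add: algebra_simps)
qed

lemma qq_integral:
  assumes "m > 0" "\<tau> \<noteq> 0"
  shows "(\<integral>w. qq m n nk X \<tau> w a b \<partial>gauss_weights n nk) = (1 / (2 * real m * \<tau>^2)) * (real nk * S2 m n X a b)"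
proof -
  have "(\<integral>w. qq m n nk X \<tau> w a b \<partial>gauss_weights n nk) = (1 / (2 * real m * \<tau>^2)) *
     (real nk * S1 m n X a b a b - (1 / real m) * (\<Sum>c<m. real nk * S1 m n X a c a c))"
    unfolding qq_alt[OF assms(2,1)]
    by (simp add: Bochner_Integration.integral_diff Bochner_Integration.integrable_sum Yc2_int
        Bochner_Integration.integral_sum Yc2_integral Bochner_Integration.integrable_diff)
  also have "\<dots> = (1 / (2 * real m * \<tau>^2)) * (real nk * (S1 m n X a b a b - (1 / real m) * (\<Sum>c<m. S1 m n X a c a c)))"
    by (simp add: sum_distrib_left[symmetric] algebra_simps)
  finally show ?thesis unfolding S2_from_S1[OF assms(1)] .
qed



lemma Hx_lin: "Hx d1 d2 d3 d4 l1 l2 l3 l4 q1 q2 q3 q4 =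
   d1*d2*d3*d4 + (d2*d3*d4)*l1 + (d1*d3*d4)*l2 + (d1*d2*d4)*l3 + (d1*d2*d3)*l4
   + (d2*d3*d4)*q1 + (d1*d3*d4)*q2 + (d1*d2*d4)*q3 + (d1*d2*d3)*q4
   + (d3*d4)*(l1*l2) + (d2*d4)*(l1*l3) + (d2*d3)*(l1*l4) + (d1*d4)*(l2*l3) + (d1*d3)*(l2*l4) + (d1*d2)*(l3*l4)"
  unfolding Hx_def by (simp add: algebra_simps)

lemma kron_bounds: "0 \<le> kron a b" "kron a b \<le> 1"
  unfolding kron_def by auto

theorem lemmaC4:
  fixes m n nk :: nat and X :: "nat \<Rightarrow> nat \<Rightarrow> real"
    and \<alpha> \<alpha>' \<beta> \<beta>' \<delta> \<delta>' \<omega> \<omega>' :: nat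
  assumes "n > 0"
    and "\<alpha> < m" "\<alpha>' < m" "\<beta> < m" "\<beta>' < m" "\<delta> < m" "\<delta>' < m" "\<omega> < m" "\<omega>' < m"
  shows "\<exists>C T. \<forall>\<tau>::real. \<tau> \<ge> T \<longrightarrow>
    \<bar>(\<integral>w. Am m n nk X \<tau> (WKof w) (WQof w) \<alpha> \<alpha>' * Am m n nk X \<tau> (WKof w) (WQof w) \<beta> \<beta>'
            * Am m n nk X \<tau> (WKof w) (WQof w) \<delta> \<delta>' * Am m n nk X \<tau> (WKof w) (WQof w) \<omega> \<omega>'
          \<partial>gauss_weights n nk)
     - (kron \<alpha> \<alpha>' * kron \<beta> \<beta>' * kron \<delta> \<delta>' * kron \<omega> \<omega>'
        + real nk / (\<tau>^2 * (real m)^2) *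
           (kron \<alpha> \<alpha>' * kron \<beta> \<beta>' * S1 m n X \<delta> \<delta>' \<omega> \<omega>'
          + kron \<alpha> \<alpha>' * kron \<delta> \<delta>' * S1 m n X \<beta> \<beta>' \<omega> \<omega>'
          + kron \<alpha> \<alpha>' * kron \<omega> \<omega>' * S1 m n X \<beta> \<beta>' \<delta> \<delta>'
          + kron \<beta> \<beta>' * kron \<delta> \<delta>' * S1 m n X \<alpha> \<alpha>' \<omega> \<omega>'
          + kron \<beta> \<beta>' * kron \<omega> \<omega>' * S1 m n X \<alpha> \<alpha>' \<delta> \<delta>'
          + kron \<omega> \<omega>' * kron \<delta> \<delta>' * S1 m n X \<alpha> \<alpha>' \<beta> \<beta>')
        + real nk / (2 * \<tau>^2 * real m) *
           (kron \<alpha> \<alpha>' * kron \<beta> \<beta>' * kron \<delta> \<delta>' * S2 m n X \<omega> \<omega>'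
          + kron \<alpha> \<alpha>' * kron \<beta> \<beta>' * kron \<omega> \<omega>' * S2 m n X \<delta> \<delta>'
          + kron \<alpha> \<alpha>' * kron \<omega> \<omega>' * kron \<delta> \<delta>' * S2 m n X \<beta> \<beta>'
          + kron \<omega> \<omega>' * kron \<beta> \<beta>' * kron \<delta> \<delta>' * S2 m n X \<alpha> \<alpha>'))\<bar>
     \<le> C * real nk / \<tau>^3"
proof -
  interpret G: prob_space "gauss_weights n nk" by (rule gw_prob)
  have m: "m > 0" using assms(2) by simp
  define ES where "ES = (\<integral>w. (Ssq n nk w)^3 \<partial>gauss_weights n nk)"
  define K where "K = Kc m n nk X"
  define C where "C = KD * K^3 * ES / real nk"
  show ?thesis
  proof (rule exI[of _ C], rule exI[of _ 1], intro allI impI)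
    fix \<tau> :: real
    assume tau1: "1 \<le> \<tau>"
    then have tau: "\<tau> > 0" by simp
    define A where "A w a b = Am m n nk X \<tau> (WKof w) (WQof w) a b" for w a b
    define f where "f w = A w \<alpha> \<alpha>' * A w \<beta> \<beta>' * A w \<delta> \<delta>' * A w \<omega> \<omega>'" for w
    define L where "L w a b = lq m n nk X \<tau> w a b" for w a b
    define Q where "Q w a b = qq m n nk X \<tau> w a b" for w a b
    define Hw where "Hw w = Hx (kron \<alpha> \<alpha>') (kron \<beta> \<beta>') (kron \<delta> \<delta>') (kron \<omega> \<omega>')
       (L w \<alpha> \<alpha>') (L w \<beta> \<beta>') (L w \<delta> \<delta>') (L w \<omega> \<omega>')
       (Q w \<alpha> \<alpha>') (Q w \<beta> \<beta>') (Q w \<delta> \<delta>') (Q w \<omega> \<omega>')" for w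
    define tt where "tt w = K * Ssq n nk w / \<tau>" for w
    have tt0: "tt w \<ge> 0" for w unfolding tt_def K_def using Kc_nonneg Ssq_nonneg tau by simp
    have xb: "\<bar>YY n nk X w a c / \<tau>\<bar> \<le> tt w" if "a < m" "c < m" for w a c
    proof -
      have "\<bar>YY n nk X w a c / \<tau>\<bar> = \<bar>YY n nk X w a c\<bar> / \<tau>" using tau by simp
      also have "\<dots> \<le> K * Ssq n nk w / \<tau>" unfolding K_def using YY_bound[OF that] tau by (intro divide_right_mono) auto
      finally show ?thesis unfolding tt_def .
    qed
    have sb: "0 \<le> softmax_row m (\<lambda>c e. Ym n nk X (WKof w) (WQof w) c e / \<tau>) a b"
      "softmax_row m (\<lambda>c e. Ym n nk X (WKof w) (WQof w) c e / \<tau>) a b \<le> 1" if "b < m" for w a b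
      using softmax_bounds[OF that] by auto
    have p: "0 < 1 / real m" "1 / real m \<le> 1" using m by simp_all
    have pw: "\<bar>f w - Hw w\<bar> \<le> KD * (tt w)^3" for w
    proof -
      note eb = entry_bounds[OF _ tau tt0 xb]
      show ?thesis unfolding f_def Hw_def A_def Am_def L_def Q_def
        apply (rule four_prod_bound[OF tt0 p kron_bounds kron_bounds kron_bounds kron_bounds
               sb[OF assms(3)] sb[OF assms(5)] sb[OF assms(7)] sb[OF assms(9)]])
        using eb[OF assms(3) assms(2)] eb[OF assms(5) assms(4)] eb[OF assms(7) assms(6)] eb[OF assms(9) assms(8)]
        by auto
    qed
    have f_int: "integrable (gauss_weights n nk) f"
    proof (rule G.integrable_const_bound[where B = 16])
      show "AE w in gauss_weights n nk. norm (f w) \<le> 16"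
      proof (rule AE_I2)
        fix w
        have "\<bar>f w\<bar> \<le> 2 * 2 * 2 * 2" unfolding f_def abs_mult A_def
          using Am_bound[OF assms(3)] Am_bound[OF assms(5)] Am_bound[OF assms(7)] Am_bound[OF assms(9)]
          by (intro mult_mono) auto
        then show "norm (f w) \<le> 16" by simp
      qed
      show "f \<in> borel_measurable (gauss_weights n nk)" unfolding f_def A_def
        using Am_meas by measurable
    qed
    have Hw_int: "integrable (gauss_weights n nk) Hw"
      unfolding Hw_def Hx_lin L_def Q_def
      by (intro Bochner_Integration.integrable_add integrable_mult_right lq_int qq_int lq2_int G.integrable_const
          tau[THEN less_imp_neq, symmetric] m)
    have Hw_integral: "(\<integral>w. Hw w \<partial>gauss_weights n nk) = (kron \<alpha> \<alpha>' * kron \<beta> \<beta>' * kron \<delta> \<delta>' * kron \<omega> \<omega>'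
        + real nk / (\<tau>^2 * (real m)^2) *
           (kron \<alpha> \<alpha>' * kron \<beta> \<beta>' * S1 m n X \<delta> \<delta>' \<omega> \<omega>'
          + kron \<alpha> \<alpha>' * kron \<delta> \<delta>' * S1 m n X \<beta> \<beta>' \<omega> \<omega>'
          + kron \<alpha> \<alpha>' * kron \<omega> \<omega>' * S1 m n X \<beta> \<beta>' \<delta> \<delta>'
          + kron \<beta> \<beta>' * kron \<delta> \<delta>' * S1 m n X \<alpha> \<alpha>' \<omega> \<omega>'
          + kron \<beta> \<beta>' * kron \<omega> \<omega>' * S1 m n X \<alpha> \<alpha>' \<delta> \<delta>'
          + kron \<omega> \<omega>' * kron \<delta> \<delta>' * S1 m n X \<alpha> \<alpha>' \<beta> \<beta>')
        + real nk / (2 * \<tau>^2 * real m) *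
           (kron \<alpha> \<alpha>' * kron \<beta> \<beta>' * kron \<delta> \<delta>' * S2 m n X \<omega> \<omega>'
          + kron \<alpha> \<alpha>' * kron \<beta> \<beta>' * kron \<omega> \<omega>' * S2 m n X \<delta> \<delta>'
          + kron \<alpha> \<alpha>' * kron \<omega> \<omega>' * kron \<delta> \<delta>' * S2 m n X \<beta> \<beta>'
          + kron \<omega> \<omega>' * kron \<beta> \<beta>' * kron \<delta> \<delta>' * S2 m n X \<alpha> \<alpha>'))"
      proof -
      have tn: "\<tau> \<noteq> 0" using tau by simp
      have "(\<integral>w. Hw w \<partial>gauss_weights n nk) =
         kron \<alpha> \<alpha>' * kron \<beta> \<beta>' * kron \<delta> \<delta>' * kron \<omega> \<omega>'
       + (kron \<beta> \<beta>' * kron \<delta> \<delta>' * kron \<omega> \<omega>') * ((1 / (2 * real m * \<tau>^2)) * (real nk * S2 m n X \<alpha> \<alpha>'))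
       + (kron \<alpha> \<alpha>' * kron \<delta> \<delta>' * kron \<omega> \<omega>') * ((1 / (2 * real m * \<tau>^2)) * (real nk * S2 m n X \<beta> \<beta>'))
       + (kron \<alpha> \<alpha>' * kron \<beta> \<beta>' * kron \<omega> \<omega>') * ((1 / (2 * real m * \<tau>^2)) * (real nk * S2 m n X \<delta> \<delta>'))
       + (kron \<alpha> \<alpha>' * kron \<beta> \<beta>' * kron \<delta> \<delta>') * ((1 / (2 * real m * \<tau>^2)) * (real nk * S2 m n X \<omega> \<omega>'))
       + (kron \<delta> \<delta>' * kron \<omega> \<omega>') * ((1 / (real m * \<tau>))^2 * (real nk * S1 m n X \<alpha> \<alpha>' \<beta> \<beta>'))
       + (kron \<beta> \<beta>' * kron \<omega> \<omega>') * ((1 / (real m * \<tau>))^2 * (real nk * S1 m n X \<alpha> \<alpha>' \<delta> \<delta>'))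
       + (kron \<beta> \<beta>' * kron \<delta> \<delta>') * ((1 / (real m * \<tau>))^2 * (real nk * S1 m n X \<alpha> \<alpha>' \<omega> \<omega>'))
       + (kron \<alpha> \<alpha>' * kron \<omega> \<omega>') * ((1 / (real m * \<tau>))^2 * (real nk * S1 m n X \<beta> \<beta>' \<delta> \<delta>'))
       + (kron \<alpha> \<alpha>' * kron \<delta> \<delta>') * ((1 / (real m * \<tau>))^2 * (real nk * S1 m n X \<beta> \<beta>' \<omega> \<omega>'))
       + (kron \<alpha> \<alpha>' * kron \<beta> \<beta>') * ((1 / (real m * \<tau>))^2 * (real nk * S1 m n X \<delta> \<delta>' \<omega> \<omega>'))"
        unfolding Hw_def Hx_lin L_def Q_def
        by (simp add: Bochner_Integration.integral_add Bochner_Integration.integrable_add lq_int qq_int[OF tn m] lq2_int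
              lq_integral qq_integral[OF m tn] lq2_integral G.integrable_const G.prob_space del: of_nat_eq_0_iff)
      also have "\<dots> = (kron \<alpha> \<alpha>' * kron \<beta> \<beta>' * kron \<delta> \<delta>' * kron \<omega> \<omega>'
        + real nk / (\<tau>^2 * (real m)^2) *
           (kron \<alpha> \<alpha>' * kron \<beta> \<beta>' * S1 m n X \<delta> \<delta>' \<omega> \<omega>'
          + kron \<alpha> \<alpha>' * kron \<delta> \<delta>' * S1 m n X \<beta> \<beta>' \<omega> \<omega>'
          + kron \<alpha> \<alpha>' * kron \<omega> \<omega>' * S1 m n X \<beta> \<beta>' \<delta> \<delta>'
          + kron \<beta> \<beta>' * kron \<delta> \<delta>' * S1 m n X \<alpha> \<alpha>' \<omega> \<omega>'
          + kron \<beta> \<beta>' * kron \<omega> \<omega>' * S1 m n X \<alpha> \<alpha>' \<delta> \<delta>'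
          + kron \<omega> \<omega>' * kron \<delta> \<delta>' * S1 m n X \<alpha> \<alpha>' \<beta> \<beta>')
        + real nk / (2 * \<tau>^2 * real m) *
           (kron \<alpha> \<alpha>' * kron \<beta> \<beta>' * kron \<delta> \<delta>' * S2 m n X \<omega> \<omega>'
          + kron \<alpha> \<alpha>' * kron \<beta> \<beta>' * kron \<omega> \<omega>' * S2 m n X \<delta> \<delta>'
          + kron \<alpha> \<alpha>' * kron \<omega> \<omega>' * kron \<delta> \<delta>' * S2 m n X \<beta> \<beta>'
          + kron \<omega> \<omega>' * kron \<beta> \<beta>' * kron \<delta> \<delta>' * S2 m n X \<alpha> \<alpha>'))"
        using m tn by (simp add: field_simps power2_eq_square)
      finally show ?thesis .
    qed
    have S3_int: "integrable (gauss_weights n nk) (\<lambda>w. KD * (tt w)^3)"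
      unfolding tt_def by (simp add: power_divide power_mult_distrib Ssq3_int)
    have "\<bar>(\<integral>w. f w \<partial>gauss_weights n nk) - (\<integral>w. Hw w \<partial>gauss_weights n nk)\<bar>
        = \<bar>\<integral>w. f w - Hw w \<partial>gauss_weights n nk\<bar>"
      using f_int Hw_int by (simp add: Bochner_Integration.integral_diff)
    also have "\<dots> \<le> (\<integral>w. \<bar>f w - Hw w\<bar> \<partial>gauss_weights n nk)"
      using integral_norm_bound[of "gauss_weights n nk" "\<lambda>w. f w - Hw w"] by simp
    also have "\<dots> \<le> (\<integral>w. KD * (tt w)^3 \<partial>gauss_weights n nk)"
      using f_int Hw_int S3_int pw by (intro integral_mono) auto
    also have "\<dots> = KD * K^3 * ES / \<tau>^3"
      unfolding tt_def ES_def by (simp add: power_divide power_mult_distrib Ssq3_int)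
    also have "\<dots> = C * real nk / \<tau>^3"
    proof (cases "nk = 0")
      case True
      then show ?thesis unfolding K_def Kc_def C_def by simp
    next
      case False
      then show ?thesis unfolding C_def by simp
    qed
    finally have main: "\<bar>(\<integral>w. f w \<partial>gauss_weights n nk) - (\<integral>w. Hw w \<partial>gauss_weights n nk)\<bar> \<le> C * real nk / \<tau>^3" .
    show "\<bar>(\<integral>w. Am m n nk X \<tau> (WKof w) (WQof w) \<alpha> \<alpha>' * Am m n nk X \<tau> (WKof w) (WQof w) \<beta> \<beta>'
            * Am m n nk X \<tau> (WKof w) (WQof w) \<delta> \<delta>' * Am m n nk X \<tau> (WKof w) (WQof w) \<omega> \<omega>'
          \<partial>gauss_weights n nk) - (kron \<alpha> \<alpha>' * kron \<beta> \<beta>' * kron \<delta> \<delta>' * kron \<omega> \<omega>'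
        + real nk / (\<tau>^2 * (real m)^2) *
           (kron \<alpha> \<alpha>' * kron \<beta> \<beta>' * S1 m n X \<delta> \<delta>' \<omega> \<omega>'
          + kron \<alpha> \<alpha>' * kron \<delta> \<delta>' * S1 m n X \<beta> \<beta>' \<omega> \<omega>'
          + kron \<alpha> \<alpha>' * kron \<omega> \<omega>' * S1 m n X \<beta> \<beta>' \<delta> \<delta>'
          + kron \<beta> \<beta>' * kron \<delta> \<delta>' * S1 m n X \<alpha> \<alpha>' \<omega> \<omega>'
          + kron \<beta> \<beta>' * kron \<omega> \<omega>' * S1 m n X \<alpha> \<alpha>' \<delta> \<delta>'
          + kron \<omega> \<omega>' * kron \<delta> \<delta>' * S1 m n X \<alpha> \<alpha>' \<beta> \<beta>')
        + real nk / (2 * \<tau>^2 * real m) *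
           (kron \<alpha> \<alpha>' * kron \<beta> \<beta>' * kron \<delta> \<delta>' * S2 m n X \<omega> \<omega>'
          + kron \<alpha> \<alpha>' * kron \<beta> \<beta>' * kron \<omega> \<omega>' * S2 m n X \<delta> \<delta>'
          + kron \<alpha> \<alpha>' * kron \<omega> \<omega>' * kron \<delta> \<delta>' * S2 m n X \<beta> \<beta>'
          + kron \<omega> \<omega>' * kron \<beta> \<beta>' * kron \<delta> \<delta>' * S2 m n X \<alpha> \<alpha>'))\<bar> \<le> C * real nk / \<tau>^3"
      using main unfolding Hw_integral unfolding f_def A_def .
  qed
qed


end
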